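(* Let $L(y,z)$ be a positive cell complexity function, monotonically increasing in $y$ and $z$, with $L(y,z)=\Theta(z^a)$ for some constant $a>0$ (i.e. there are constants $0<c_1\le c_2$ with $c_1z^a\le L(y,z)\le c_2 z^a$ for all arguments). Consider, as $N\to\infty$, a 1-layered FDCA $\mathcal{A}_1$ and a 2-layered FDCA $\mathcal{A}_2$ with working zone of size $N$ recognizing the same nontrivial class $D$ of input configurations, with $P_1=|D|$, $P_2$ the cardinality of the class of layer-$1$ local configurations recognized by the top (layer-2) cell of $\mathcal{A}_2$, $p$ the cardinality of the class of layer-$0$ local configurations recognized by a layer-$1$ cell of $\mathcal{A}_2$, and $n$ the size of the layer-$1$ basic neighborhood of $\mathcal{A}_2$ (all of $P_1,P_2,p$ positive). Then: (a) $\dfrac{L(N,P_2)}{L(N,P_1)}\to 0$ if and only if $\dfrac{P_2}{P_1}\to 0$; (b) if $p=o\!\left(P_1/N^{1/a}\right)$, then $\dfrac{N\cdot L(n,p)}{L(N,P_1)}\to 0$.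
   Context: An FDCA is a finite layered cellular automaton on $\mathbb{Z}^2$ with binary alphabets, square basic neighborhoods $N_i=[-r_i,r_i]^2$, a square working zone $W=[w]^2$ with fixed boundary conditions, where layer-$i$ states are computed as $X_i(c)=f_i(x_{i-1,c})$ with $x_{i-1,c}(z)=X_{i-1}(c+z)$, $z\in N_i$. An automaton recognizes a class $D$ of input configurations by a cell $c$ of layer $i$ if some state $k$ satisfies $X_i(c)=k$ iff $X_0\in D$; a cell recognizes a class of local configurations of the preceding layer analogously. A 1-layered (resp. 2-layered) FDCA has a cell $c$ with $c+N_1=W$ (resp. $c+N_2=W$), recognition being done by that top-layer cell, so its basic neighborhood has size $N=|W|$. The cell complexity $L(n,p)$ depends on the neighborhood size $n$ and the cardinality $p$ of the class of local configurations the cell recognizes. *)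

theory Defs
  imports Complex_Main "HOL-Library.Landau_Symbols"
begin

type_synonym cell = "int \<times> int"
type_synonym config = "cell \<Rightarrow> bool"

definition shift :: "cell \<Rightarrow> cell \<Rightarrow> cell" where
  "shift c z = (fst c + fst z, snd c + snd z)"

definition square_nb :: "nat \<Rightarrow> cell set" where
  "square_nb r = {- int r..int r} \<times> {- int r..int r}"

definition zone :: "nat \<Rightarrow> cell set" where
  "zone w = {1..int w} \<times> {1..int w}"

definition local_cfg :: "config \<Rightarrow> cell \<Rightarrow> cell set \<Rightarrow> config" where
  "local_cfg X c Nb = (\<lambda>z. if z \<in> Nb then X (shift c z) else False)"

definition next_layer :: "(config \<Rightarrow> bool) \<Rightarrow> cell set \<Rightarrow> nat \<Rightarrow> bool \<Rightarrow> config \<Rightarrow> config" where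
  "next_layer f Nb w b X = (\<lambda>c. if c \<in> zone w then f (local_cfg X c Nb) else b)"

definition inputs :: "nat \<Rightarrow> bool \<Rightarrow> config set" where
  "inputs w b = {X. \<forall>z. z \<notin> zone w \<longrightarrow> X z = b}"

definition class_of :: "(config \<Rightarrow> bool) \<Rightarrow> cell set \<Rightarrow> bool \<Rightarrow> config set" where
  "class_of f Nb k = {x. (\<forall>z. z \<notin> Nb \<longrightarrow> x z = False) \<and> f x = k}"

text \<open>A 1-layered FDCA (zone w, layer-0 boundary b0, layer-1 boundary b1,
  radius r1, local rule f1) recognizes D by its top cell c, with c + N_1 = W.\<close>
definition fdca1_recognizes ::
  "nat \<Rightarrow> bool \<Rightarrow> bool \<Rightarrow> nat \<Rightarrow> (config \<Rightarrow> bool) \<Rightarrow> cell \<Rightarrow> config set \<Rightarrow> bool" where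
  "fdca1_recognizes w b0 b1 r1 f1 c D \<longleftrightarrow>
     shift c ` square_nb r1 = zone w \<and> D \<subseteq> inputs w b0 \<and>
     (\<exists>k. \<forall>X \<in> inputs w b0.
        (next_layer f1 (square_nb r1) w b1 X c = k \<longleftrightarrow> X \<in> D))"

definition fdca2_recognizes ::
  "nat \<Rightarrow> bool \<Rightarrow> bool \<Rightarrow> bool \<Rightarrow> nat \<Rightarrow> (config \<Rightarrow> bool) \<Rightarrow> nat \<Rightarrow> (config \<Rightarrow> bool)
     \<Rightarrow> cell \<Rightarrow> bool \<Rightarrow> config set \<Rightarrow> bool" where
  "fdca2_recognizes w b0 b1 b2 r1 f1 r2 f2 c k D \<longleftrightarrow>
     shift c ` square_nb r2 = zone w \<and> D \<subseteq> inputs w b0 \<and>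
     (\<forall>X \<in> inputs w b0.
        (next_layer f2 (square_nb r2) w b2 (next_layer f1 (square_nb r1) w b1 X) c = k
          \<longleftrightarrow> X \<in> D))"

end

theory Submission
  imports Defs
begin


lemma my_null_comparison:
  fixes f g :: "nat \<Rightarrow> real"
  assumes "g \<longlonglongrightarrow> 0" "\<And>x. norm (f x) \<le> g x"
  shows "f \<longlonglongrightarrow> 0"
proof (rule tendsto_0_le[OF assms(1), of _ 1])
  show "eventually (\<lambda>x. norm (f x) \<le> norm (g x) * 1) sequentially"
    using assms(2) by (intro always_eventually) (auto intro: order_trans[OF _ abs_ge_self])
qed

lemma powr_zero_iff_tendsto:
  fixes f :: "nat \<Rightarrow> real" and a :: real
  assumes "a > 0" "\<And>j. f j \<ge> 0"
  shows "(f \<longlonglongrightarrow> 0) \<longleftrightarrow> ((\<lambda>j. f j powr a) \<longlonglongrightarrow> 0)"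
proof
  assume "f \<longlonglongrightarrow> 0"
  then show "(\<lambda>j. f j powr a) \<longlonglongrightarrow> 0"
    using tendsto_zero_powrI[of f sequentially "\<lambda>_. a" a] assms by auto
next
  assume h: "(\<lambda>j. f j powr a) \<longlonglongrightarrow> 0"
  have "(\<lambda>j. (f j powr a) powr (1/a)) \<longlonglongrightarrow> 0"
    using tendsto_zero_powrI[OF h, of "\<lambda>_. 1/a" "1/a"] assms by auto
  moreover have "\<And>j. (f j powr a) powr (1/a) = f j"
    using assms by (simp add: powr_powr)
  ultimately show "f \<longlonglongrightarrow> 0" by simp
qed

theorem corollary10:
  fixes L :: "nat \<Rightarrow> nat \<Rightarrow> real" and a c1 c2 :: real
    and w :: "nat \<Rightarrow> nat" and b0 :: "nat \<Rightarrow> bool" and D :: "nat \<Rightarrow> config set"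
    \<comment> \<open>1-layered FDCA A1\<close>
    and ba1 :: "nat \<Rightarrow> bool" and ra :: "nat \<Rightarrow> nat" and fa :: "nat \<Rightarrow> config \<Rightarrow> bool"
    and ca :: "nat \<Rightarrow> cell"
    \<comment> \<open>2-layered FDCA A2\<close>
    and b1 b2 :: "nat \<Rightarrow> bool" and r1 r2 :: "nat \<Rightarrow> nat" and f1 f2 :: "nat \<Rightarrow> config \<Rightarrow> bool"
    and c :: "nat \<Rightarrow> cell" and k k1 :: "nat \<Rightarrow> bool"
    and N P1 P2 p n :: "nat \<Rightarrow> nat"
  assumes L_pos: "\<And>y z. L y z > 0"
    and L_mono: "\<And>y y' z z'. y \<le> y' \<Longrightarrow> z \<le> z' \<Longrightarrow> L y z \<le> L y' z'"
    and a_pos: "a > 0" and c1_pos: "0 < c1" and c12: "c1 \<le> c2"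
    and L_Theta: "\<And>y z. z \<ge> 1 \<Longrightarrow> c1 * real z powr a \<le> L y z \<and> L y z \<le> c2 * real z powr a"
    and A1: "\<And>j. fdca1_recognizes (w j) (b0 j) (ba1 j) (ra j) (fa j) (ca j) (D j)"
    and A2: "\<And>j. fdca2_recognizes (w j) (b0 j) (b1 j) (b2 j) (r1 j) (f1 j) (r2 j) (f2 j)
                  (c j) (k j) (D j)"
    and nontriv: "\<And>j. D j \<noteq> {} \<and> D j \<noteq> inputs (w j) (b0 j)"
    and N_def: "\<And>j. N j = card (zone (w j))"
    and N_lim: "filterlim N at_top sequentially"
    and P1_def: "\<And>j. P1 j = card (D j)"
    and P2_def: "\<And>j. P2 j = card (class_of (f2 j) (square_nb (r2 j)) (k j))"
    and p_def: "\<And>j. p j = card (class_of (f1 j) (square_nb (r1 j)) (k1 j))"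
    and n_def: "\<And>j. n j = card (square_nb (r1 j))"
    and pos: "\<And>j. P1 j > 0 \<and> P2 j > 0 \<and> p j > 0"
  shows "((\<lambda>j. L (N j) (P2 j) / L (N j) (P1 j)) \<longlonglongrightarrow> 0
           \<longleftrightarrow> (\<lambda>j. real (P2 j) / real (P1 j)) \<longlonglongrightarrow> 0)
     \<and> ((\<lambda>j. real (p j)) \<in> o(\<lambda>j. real (P1 j) / real (N j) powr (1 / a))
           \<longrightarrow> (\<lambda>j. real (N j) * L (n j) (p j) / L (N j) (P1 j)) \<longlonglongrightarrow> 0)"

proof -
  have P1r: "\<And>j. real (P1 j) \<ge> 1" "\<And>j. real (P2 j) \<ge> 1" "\<And>j. real (p j) \<ge> 1"
    using pos by (auto simp: Suc_le_eq)
  have up: "L (N j) (P2 j) / L (N j) (P1 j) \<le> (c2/c1) * (real (P2 j) / real (P1 j)) powr a" for j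
  proof -
    have u: "L (N j) (P2 j) \<le> c2 * real (P2 j) powr a" and l: "c1 * real (P1 j) powr a \<le> L (N j) (P1 j)"
      using L_Theta pos by (auto simp: Suc_le_eq)
    have pp: "real (P1 j) powr a > 0" using P1r(1)[of j] by simp
    have "L (N j) (P2 j) / L (N j) (P1 j) \<le> c2 * real (P2 j) powr a / (c1 * real (P1 j) powr a)"
      using u l L_pos c1_pos c12 pp by (intro frac_le) auto
    also have "\<dots> = (c2/c1) * (real (P2 j) / real (P1 j)) powr a"
      by (simp add: powr_divide)
    finally show ?thesis .
  qed
  have lo: "(c1/c2) * (real (P2 j) / real (P1 j)) powr a \<le> L (N j) (P2 j) / L (N j) (P1 j)" for j
  proof -
    have u: "L (N j) (P1 j) \<le> c2 * real (P1 j) powr a" and l: "c1 * real (P2 j) powr a \<le> L (N j) (P2 j)"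
      using L_Theta pos by (auto simp: Suc_le_eq)
    have pp: "real (P1 j) powr a > 0" using P1r(1)[of j] by simp
    have "(c1/c2) * (real (P2 j) / real (P1 j)) powr a = c1 * real (P2 j) powr a / (c2 * real (P1 j) powr a)"
      by (simp add: powr_divide)
    also have "\<dots> \<le> L (N j) (P2 j) / L (N j) (P1 j)"
      using u l L_pos c1_pos c12 pp by (intro frac_le) (auto intro: less_imp_le)
    finally show ?thesis .
  qed
  have qnn: "\<And>j. real (P2 j) / real (P1 j) \<ge> 0" by simp
  have partA: "((\<lambda>j. L (N j) (P2 j) / L (N j) (P1 j)) \<longlonglongrightarrow> 0)
           \<longleftrightarrow> (\<lambda>j. real (P2 j) / real (P1 j)) \<longlonglongrightarrow> 0"
  proof
    assume h: "(\<lambda>j. L (N j) (P2 j) / L (N j) (P1 j)) \<longlonglongrightarrow> 0"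
    have "(\<lambda>j. (c2/c1) * (L (N j) (P2 j) / L (N j) (P1 j))) \<longlonglongrightarrow> 0"
      using tendsto_mult_right_zero[OF h, of "c2/c1"] by blast
    moreover have "norm ((real (P2 j) / real (P1 j)) powr a) \<le> (c2/c1) * (L (N j) (P2 j) / L (N j) (P1 j))" for j
    proof -
      have "(c1/c2) * (real (P2 j) / real (P1 j)) powr a \<le> L (N j) (P2 j) / L (N j) (P1 j)" by (rule lo)
      hence "(c2/c1) * ((c1/c2) * (real (P2 j) / real (P1 j)) powr a) \<le> (c2/c1) * (L (N j) (P2 j) / L (N j) (P1 j))"
        using c1_pos c12 by (intro mult_left_mono) auto
      thus ?thesis using c1_pos c12 by simp
    qed
    ultimately have "(\<lambda>j. (real (P2 j) / real (P1 j)) powr a) \<longlonglongrightarrow> 0"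
      by (rule my_null_comparison)
    thus "(\<lambda>j. real (P2 j) / real (P1 j)) \<longlonglongrightarrow> 0"
      using powr_zero_iff_tendsto[of a "\<lambda>j. real (P2 j) / real (P1 j)"] a_pos by simp
  next
    assume h: "(\<lambda>j. real (P2 j) / real (P1 j)) \<longlonglongrightarrow> 0"
    hence "(\<lambda>j. (real (P2 j) / real (P1 j)) powr a) \<longlonglongrightarrow> 0"
      using powr_zero_iff_tendsto[of a "\<lambda>j. real (P2 j) / real (P1 j)"] a_pos by simp
    hence "(\<lambda>j. (c2/c1) * (real (P2 j) / real (P1 j)) powr a) \<longlonglongrightarrow> 0"
      using tendsto_mult_right_zero by blast
    moreover have "norm (L (N j) (P2 j) / L (N j) (P1 j)) \<le> (c2/c1) * (real (P2 j) / real (P1 j)) powr a" for j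
      using up[of j] L_pos[of "N j" "P2 j"] L_pos[of "N j" "P1 j"] by simp
    ultimately show "(\<lambda>j. L (N j) (P2 j) / L (N j) (P1 j)) \<longlonglongrightarrow> 0"
      by (rule my_null_comparison)
  qed
  have partB: "(\<lambda>j. real (N j) * L (n j) (p j) / L (N j) (P1 j)) \<longlonglongrightarrow> 0"
    if o: "(\<lambda>j. real (p j)) \<in> o(\<lambda>j. real (P1 j) / real (N j) powr (1 / a))"
  proof -
    define x where "x j = real (p j) * real (N j) powr (1/a) / real (P1 j)" for j
    have xnn: "\<And>j. x j \<ge> 0" by (simp add: x_def)
    have evN: "eventually (\<lambda>j. N j \<ge> 1) sequentially"
      using N_lim by (simp add: filterlim_at_top)
    have "x \<longlonglongrightarrow> 0"
    proof (rule order_tendstoI)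
      fix e :: real assume "e < 0"
      thus "eventually (\<lambda>j. e < x j) sequentially" using xnn
        by (intro always_eventually) (auto intro: less_le_trans)
    next
      fix e :: real assume e: "e > 0"
      have "eventually (\<lambda>j. norm (real (p j)) \<le> (e/2) * norm (real (P1 j) / real (N j) powr (1 / a))) sequentially"
        using landau_o.smallD[OF o, of "e/2"] e by simp
      with evN show "eventually (\<lambda>j. x j < e) sequentially"
      proof eventually_elim
        case (elim j)
        have Np: "real (N j) powr (1/a) > 0" using elim(1) by simp
        have "real (p j) \<le> (e/2) * (real (P1 j) / real (N j) powr (1 / a))"
          using elim(2) by simp
        hence "real (p j) * real (N j) powr (1/a) \<le> (e/2) * real (P1 j)"
          using Np by (simp add: field_simps)
        hence "x j \<le> e/2" using P1r(1)[of j] by (simp add: x_def field_simps)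
        thus ?case using e by simp
      qed
    qed
    hence "(\<lambda>j. x j powr a) \<longlonglongrightarrow> 0"
      using powr_zero_iff_tendsto[of a x] a_pos xnn by simp
    hence "(\<lambda>j. (c2/c1) * x j powr a) \<longlonglongrightarrow> 0"
      using tendsto_mult_right_zero by blast
    moreover have "norm (real (N j) * L (n j) (p j) / L (N j) (P1 j)) \<le> (c2/c1) * x j powr a" for j
    proof -
      have u: "L (n j) (p j) \<le> c2 * real (p j) powr a" and l: "c1 * real (P1 j) powr a \<le> L (N j) (P1 j)"
        using L_Theta pos by (auto simp: Suc_le_eq)
      have pp: "real (P1 j) powr a > 0" using P1r(1)[of j] by simp
      have Nn: "(real (N j) powr (1/a)) powr a = real (N j)"
        using a_pos by (cases "N j = 0") (simp_all add: powr_powr)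
      have xa: "x j powr a = real (p j) powr a * real (N j) / real (P1 j) powr a"
        by (simp add: x_def powr_divide powr_mult Nn)
      have "norm (real (N j) * L (n j) (p j) / L (N j) (P1 j)) = real (N j) * L (n j) (p j) / L (N j) (P1 j)"
        using L_pos[of "n j" "p j"] L_pos[of "N j" "P1 j"] by simp
      also have "\<dots> \<le> real (N j) * (c2 * real (p j) powr a) / (c1 * real (P1 j) powr a)"
        using u l L_pos c1_pos c12 pp by (intro frac_le mult_left_mono) auto
      also have "\<dots> = (c2/c1) * x j powr a"
        using c1_pos pp by (simp add: xa field_simps)
      finally show ?thesis .
    qed
    ultimately show ?thesis
      by (rule my_null_comparison)
  qed
  show ?thesis using partA partB by blast
qed

end
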